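(* Consider the Highest Diversity Contribution (HDC) selection mechanism on \textsc{LOTZ}, using as diversity measure either the hypervolume contribution $\mathrm{HVC}(x,P)$ with reference point $(r_1,r_2)$ satisfying $r_1\le -n^2$ and $r_2\le -n^2$, or the crowding distance contribution $\mathrm{CDC}(x,P)$, applied to a population $P$ containing only search points on the Pareto front. Then the parent chosen by HDC always has either the minimum or the maximum number of ones among all search points in $P$.
   Context: Search space $\{0,1\}^n$; objectives maximised. $\textsc{LOTZ}(x)=(\mathrm{LO}(x),\mathrm{TZ}(x))$, $\mathrm{LO}$ = number of leading ones, $\mathrm{TZ}$ = number of trailing zeros. The Pareto set is $\{1^i0^{n-i}:0\le i\le n\}$; populations consist of points with distinct objective vectors. HDC: select an individual with the highest diversity score, ties broken uniformly at random. HVC: sort $P$ by increasing $f_1$ as $x_1,\dots,x_\mu$, set $f_1(x_0)=r_1$, $f_2(x_{\mu+1})=r_2$, $\mathrm{HVC}(x_i,P)=(f_1(x_i)-f_1(x_{i-1}))(f_2(x_i)-f_2(x_{i+1}))$. CDC: each point starts at 0; for each objective $m$, sort ascending by $f_m$, boundary points get $\infty$, intermediate $P[i]$ gets $+(f_m(P[i+1])-f_m(P[i-1]))/(f_m^{\max}-f_m^{\min})$, with $f_m^{\max},f_m^{\min}$ the max and min values of objective $m$. *)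

theory Defs
  imports Complex_Main "HOL-Library.Extended_Real"
begin

text \<open>Bit strings of length n are boolean lists; True = 1, False = 0.\<close>

definition LO :: "bool list \<Rightarrow> nat" where
  "LO xs = length (takeWhile (\<lambda>b. b) xs)"

definition TZ :: "bool list \<Rightarrow> nat" where
  "TZ xs = length (takeWhile (\<lambda>b. \<not> b) (rev xs))"

definition LOTZ :: "bool list \<Rightarrow> real \<times> real" where
  "LOTZ xs = (real (LO xs), real (TZ xs))"

definition ones :: "bool list \<Rightarrow> nat" where
  "ones xs = length (filter (\<lambda>b. b) xs)"

definition pareto_set :: "nat \<Rightarrow> bool list set" where
  "pareto_set n = {replicate i True @ replicate (n - i) False | i. i \<le> n}"

definition hvc :: "real \<Rightarrow> real \<Rightarrow> ('a \<Rightarrow> real \<times> real) \<Rightarrow> 'a set \<Rightarrow> 'a \<Rightarrow> real" where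
  "hvc r1 r2 f P x =
     (let prev1 = (if \<exists>y\<in>P. fst (f y) < fst (f x)
                   then Max {fst (f y) | y. y \<in> P \<and> fst (f y) < fst (f x)} else r1);
          next2 = (if \<exists>y\<in>P. fst (f y) > fst (f x)
                   then snd (f (ARG_MIN (\<lambda>y. fst (f y)) y. y \<in> P \<and> fst (f y) > fst (f x)))
                   else r2)
      in (fst (f x) - prev1) * (snd (f x) - next2))"

definition cd_obj :: "('a \<Rightarrow> real) \<Rightarrow> 'a set \<Rightarrow> 'a \<Rightarrow> ereal" where
  "cd_obj g P x =
     (if g x = Min (g ` P) \<or> g x = Max (g ` P) then \<infinity>
      else ereal ((Min {g y | y. y \<in> P \<and> g y > g x} - Max {g y | y. y \<in> P \<and> g y < g x})
                  / (Max (g ` P) - Min (g ` P))))"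

definition cdc :: "('a \<Rightarrow> real \<times> real) \<Rightarrow> 'a set \<Rightarrow> 'a \<Rightarrow> ereal" where
  "cdc f P x = cd_obj (\<lambda>y. fst (f y)) P x + cd_obj (\<lambda>y. snd (f y)) P x"

end

theory Submission
  imports Defs
begin

lemma par: assumes "y \<in> pareto_set n"
  shows "LOTZ y = (real (ones y), real n - real (ones y)) \<and> ones y \<le> n"
proof -
  obtain i where i: "i \<le> n" "y = replicate i True @ replicate (n - i) False"
    using assms unfolding pareto_set_def by blast
  have "LO y = i" unfolding i LO_def by (simp add: takeWhile_append)
  moreover have "TZ y = n - i" unfolding i TZ_def by (simp add: takeWhile_append)
  moreover have "ones y = i" unfolding i ones_def by simp
  ultimately show ?thesis using i by (simp add: LOTZ_def)
qed

theorem lemma9: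
  fixes n :: nat and P :: "bool list set" and x :: "bool list" and r1 r2 :: real
  assumes "finite P" and "P \<noteq> {}" and "P \<subseteq> pareto_set n"
    and "x \<in> P"
    and "(r1 \<le> - ((real n)^2) \<and> r2 \<le> - ((real n)^2) \<and>
           (\<forall>y\<in>P. hvc r1 r2 LOTZ P y \<le> hvc r1 r2 LOTZ P x))
         \<or> (\<forall>y\<in>P. cdc LOTZ P y \<le> cdc LOTZ P x)"
  shows "ones x = Min (ones ` P) \<or> ones x = Max (ones ` P)"
proof (rule ccontr)
  assume nb: "\<not> ?thesis"
  have L: "\<And>y. y \<in> P \<Longrightarrow> LOTZ y = (real (ones y), real n - real (ones y)) \<and> ones y \<le> n"
    using assms(3) par by blast
  obtain xm where xm: "xm \<in> P" "ones xm = Min (ones ` P)"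
    using assms(1,2) by (metis (mono_tags, lifting) Min_in finite_imageI image_iff image_is_empty)
  obtain xM where xM: "xM \<in> P" "ones xM = Max (ones ` P)"
    using assms(1,2) by (metis (mono_tags, lifting) Max_in finite_imageI image_iff image_is_empty)
  have minle: "\<And>y. y \<in> P \<Longrightarrow> ones xm \<le> ones y" using xm assms(1) by simp
  have maxge: "\<And>y. y \<in> P \<Longrightarrow> ones y \<le> ones xM" using xM assms(1) by simp
  have lt1: "ones xm < ones x" using nb xm minle[OF assms(4)] by auto
  have lt2: "ones x < ones xM" using nb xM maxge[OF assms(4)] by auto
  have f1: "\<And>y. y \<in> P \<Longrightarrow> fst (LOTZ y) = real (ones y)" using L by simp
  have f2: "\<And>y. y \<in> P \<Longrightarrow> snd (LOTZ y) = real n - real (ones y)" using L by simp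
  show False
    using assms(5)
  proof
    assume H: "r1 \<le> - ((real n)^2) \<and> r2 \<le> - ((real n)^2) \<and>
           (\<forall>y\<in>P. hvc r1 r2 LOTZ P y \<le> hvc r1 r2 LOTZ P x)"
    define S where "S = {fst (LOTZ y) | y. y \<in> P \<and> fst (LOTZ y) < fst (LOTZ x)}"
    have Sfin: "finite S" unfolding S_def using assms(1) by simp
    have xmS: "fst (LOTZ xm) \<in> S" unfolding S_def using xm(1) lt1 f1[OF xm(1)] f1[OF assms(4)] by (intro CollectI exI[of _ xm]) auto
    have Sne: "S \<noteq> {}" using xmS by auto
    have pin: "Max S \<in> S" using Sfin Sne by simp
    have p0: "0 \<le> Max S" "Max S < real (ones x)"
      using pin f1 assms(4) unfolding S_def by auto
    have ex1: "\<exists>y\<in>P. fst (LOTZ y) < fst (LOTZ x)" using xm(1) lt1 f1[OF xm(1)] f1[OF assms(4)] by (intro bexI[of _ xm]) auto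
    define T where "T = {y \<in> P. fst (LOTZ y) > fst (LOTZ x)}"
    have Tfin: "finite T" unfolding T_def using assms(1) by simp
    have Tne: "T \<noteq> {}" unfolding T_def using xM(1) lt2 f1[OF xM(1)] f1[OF assms(4)] by auto
    define a where "a = (ARG_MIN (\<lambda>y. fst (LOTZ y)) y. y \<in> P \<and> fst (LOTZ y) > fst (LOTZ x))"
    have aT: "a \<in> T"
    proof -
      have "a = (ARG_MIN (\<lambda>y. fst (LOTZ y)) y. y \<in> T)"
        unfolding a_def T_def mem_Collect_eq by (rule refl)
      moreover have "(ARG_MIN (\<lambda>y. fst (LOTZ y)) y. y \<in> T) \<in> T"
        using arg_min_if_finite(1)[OF Tfin Tne, of "\<lambda>y. fst (LOTZ y)"] unfolding arg_min_on_def .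
      ultimately show ?thesis by simp
    qed
    have aP: "a \<in> P" using aT unfolding T_def by auto
    have agt: "ones a > ones x" using aT f1[OF aP] f1[OF assms(4)] unfolding T_def by auto
    have aleq: "ones a \<le> n" using L aP by blast
    have ex2: "\<exists>y\<in>P. fst (LOTZ y) > fst (LOTZ x)" using Tne unfolding T_def by auto
    have hx: "hvc r1 r2 LOTZ P x = (real (ones x) - Max S) * (real (ones a) - real (ones x))"
    proof -
      have "hvc r1 r2 LOTZ P x = (fst (LOTZ x) - Max S) * (snd (LOTZ x) - snd (LOTZ a))"
        unfolding hvc_def Let_def S_def a_def using ex1 ex2 by (simp only: if_True)
      then show ?thesis using f1[OF assms(4)] f2[OF assms(4)] f2[OF aP] by simp
    qed
    have hxlt: "hvc r1 r2 LOTZ P x < (real n)^2"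
    proof -
      have A: "real (ones x) - Max S < real n" using p0 lt2 maxge[OF xM(1)] L[OF xM(1)] by linarith
      have B: "0 < real (ones a) - real (ones x)" "real (ones a) - real (ones x) \<le> real n"
        using agt aleq by auto
      have "(real (ones x) - Max S) * (real (ones a) - real (ones x)) < real n * (real (ones a) - real (ones x))"
        using A B by (simp add: mult_strict_right_mono)
      also have "\<dots> \<le> real n * real n" using B by (simp add: mult_left_mono)
      finally show ?thesis using hx by (simp add: power2_eq_square)
    qed
    have nex: "\<not> (\<exists>y\<in>P. fst (LOTZ y) < fst (LOTZ xm))"
    proof
      assume "\<exists>y\<in>P. fst (LOTZ y) < fst (LOTZ xm)"
      then obtain y where y: "y \<in> P" "fst (LOTZ y) < fst (LOTZ xm)" by blast
      show False using minle[OF y(1)] f1[OF y(1)] f1[OF xm(1)] y(2) by simp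
    qed
    have ex3: "\<exists>y\<in>P. fst (LOTZ y) > fst (LOTZ xm)" using assms(4) f1[OF assms(4)] f1[OF xm(1)] lt1 by (intro bexI[of _ x]) simp_all
    define b where "b = (ARG_MIN (\<lambda>y. fst (LOTZ y)) y. y \<in> P \<and> fst (LOTZ y) > fst (LOTZ xm))"
    define U where "U = {y \<in> P. fst (LOTZ y) > fst (LOTZ xm)}"
    have Ufin: "finite U" unfolding U_def using assms(1) by simp
    have Une: "U \<noteq> {}" unfolding U_def using ex3 by auto
    have bU: "b \<in> U"
    proof -
      have "b = (ARG_MIN (\<lambda>y. fst (LOTZ y)) y. y \<in> U)"
        unfolding b_def U_def mem_Collect_eq by (rule refl)
      moreover have "(ARG_MIN (\<lambda>y. fst (LOTZ y)) y. y \<in> U) \<in> U"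
        using arg_min_if_finite(1)[OF Ufin Une, of "\<lambda>y. fst (LOTZ y)"] unfolding arg_min_on_def .
      ultimately show ?thesis by simp
    qed
    have bP: "b \<in> P" using bU unfolding U_def by auto
    have bgt: "ones b > ones xm" using bU f1[OF bP] f1[OF xm(1)] unfolding U_def by auto
    have hm: "hvc r1 r2 LOTZ P xm = (real (ones xm) - r1) * (real (ones b) - real (ones xm))"
    proof -
      have "hvc r1 r2 LOTZ P xm = (fst (LOTZ xm) - r1) * (snd (LOTZ xm) - snd (LOTZ b))"
        unfolding hvc_def Let_def b_def using nex ex3 by (simp only: if_True if_False)
      then show ?thesis using f1[OF xm(1)] f2[OF xm(1)] f2[OF bP] by simp
    qed
    have hmge: "(real n)^2 \<le> hvc r1 r2 LOTZ P xm"
    proof -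
      have A: "(real n)^2 \<le> real (ones xm) - r1" using H by simp
      have B: "1 \<le> real (ones b) - real (ones xm)" using bgt by simp
      have "(real n)^2 * 1 \<le> (real (ones xm) - r1) * (real (ones b) - real (ones xm))"
        using A B zero_le_power2[of "real n"] by (intro mult_mono) linarith+
      then show ?thesis using hm by simp
    qed
    show False using H xm(1) hxlt hmge by fastforce
  next
    assume H: "\<forall>y\<in>P. cdc LOTZ P y \<le> cdc LOTZ P x"
    define g1 where "g1 = (\<lambda>y. fst (LOTZ y))"
    define g2 where "g2 = (\<lambda>y. snd (LOTZ y))"
    have fin1: "finite (g1 ` P)" "finite (g2 ` P)" using assms(1) by auto
    have c1: "g1 x \<noteq> Min (g1 ` P)"
    proof -
      have "Min (g1 ` P) \<le> g1 xm" using fin1 xm(1) by simp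
      then show ?thesis using lt1 f1 xm(1) assms(4) unfolding g1_def by auto
    qed
    have c2: "g1 x \<noteq> Max (g1 ` P)"
    proof -
      have "g1 xM \<le> Max (g1 ` P)" using fin1 xM(1) by simp
      then show ?thesis using lt2 f1 xM(1) assms(4) unfolding g1_def by auto
    qed
    have c3: "g2 x \<noteq> Min (g2 ` P)"
    proof -
      have "Min (g2 ` P) \<le> g2 xM" using fin1 xM(1) by simp
      then show ?thesis using lt2 f2 xM(1) assms(4) unfolding g2_def by auto
    qed
    have c4: "g2 x \<noteq> Max (g2 ` P)"
    proof -
      have "g2 xm \<le> Max (g2 ` P)" using fin1 xm(1) by simp
      then show ?thesis using lt1 f2 xm(1) assms(4) unfolding g2_def by auto
    qed
    have fx: "cdc LOTZ P x < \<infinity>"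
      unfolding cdc_def cd_obj_def using c1 c2 c3 c4 unfolding g1_def g2_def by simp
    have m1: "g1 xm = Min (g1 ` P)"
      using fin1 xm(1) minle f1 unfolding g1_def by (intro Min_eqI[symmetric]) auto
    have nm: "cd_obj g2 P xm \<noteq> -\<infinity>" unfolding cd_obj_def by simp
    have "cdc LOTZ P xm = \<infinity>"
      unfolding cdc_def using m1 nm unfolding g1_def g2_def cd_obj_def by simp
    then show False using H xm(1) fx by fastforce
  qed
qed

end
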